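(* Let $\vec{\alpha}=\langle\alpha_s:s\in[\mathbb{N}]^{<\infty}\rangle$ be a sequence of nonstandard hypernatural numbers. Suppose $H\subseteq[\mathbb{N}]^{<\infty}$ satisfies $s\cup\{\alpha_s\}\in{}^*H$ for all $s\in H$. Then for every $\vec{\alpha}$-tree $T$ with $st(T)\in H$ there exists an $\vec{\alpha}$-tree $S\subseteq T$ with $st(S)=st(T)$ such that $S/st(S)\subseteq H$.
   Context: Setting (Alpha-Theory of Benci–Di Nasso): ZFC together with a new symbol $\alpha$ satisfying: ($\alpha$1) every sequence $\varphi=\langle\varphi_i:i\in\mathbb{N}\rangle$ has a unique ideal value $\varphi[\alpha]$; ($\alpha$2) if $\varphi[\alpha]=\psi[\alpha]$ and $f\circ\varphi$, $f\circ\psi$ make sense then $(f\circ\varphi)[\alpha]=(f\circ\psi)[\alpha]$; ($\alpha$3) constant real sequences $r$ have ideal value $r$, and $\langle i\rangle$ has ideal value $\alpha\notin\mathbb{N}$; ($\alpha$4) if $\vartheta_i=\{\varphi_i,\psi_i\}$ then $\vartheta[\alpha]=\{\varphi[\alpha],\psi[\alpha]\}$; ($\alpha$5) the constant sequence $\emptyset$ has ideal value $\emptyset$, and for nonempty $\psi_i$, $\psi[\alpha]=\{\vartheta[\alpha]:\vartheta_i\in\psi_i\ \forall i\}$. ${}^*A$ is the ideal value of the constant sequence $A$; elements of ${}^*\mathbb{N}\setminus\mathbb{N}$ are nonstandard hypernatural numbers. For finite $s,t\subseteq\mathbb{N}$, $s\sqsubseteq t$ means $s=\{j\in t:j\le i\}$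 for some $i$. A tree on $\mathbb{N}$ is a nonempty $T\subseteq[\mathbb{N}]^{<\infty}$ closed under $\sqsubseteq$-initial segments; stem $st(T)$ = $\sqsubseteq$-maximal $s\in T$ comparable with all elements of $T$ (if it exists); $T/s=\{t\in T:s\sqsubseteq t\}$. An $\vec{\alpha}$-tree is a tree $T$ with a stem, $T/st(T)\neq\emptyset$, and $s\cup\{\alpha_s\}\in{}^*T$ for all $s\in T/st(T)$. *)

theory Defs
  imports Main
begin

text \<open>Alpha-Theory is modelled by its standard (ultrapower) semantics: the numerosity
  alpha determines the nonprincipal ultrafilter U = {X. alpha in *X} on the naturals,
  a hypernatural is the ideal value phi[alpha] of a sequence phi :: nat => nat, and
  phi[alpha] = psi[alpha] iff {i. phi i = psi i} is in U.\<close>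

definition nonprincipal_uf :: "nat set set \<Rightarrow> bool" where
  "nonprincipal_uf U \<longleftrightarrow>
     UNIV \<in> U \<and> {} \<notin> U \<and>
     (\<forall>X Y. X \<in> U \<and> X \<subseteq> Y \<longrightarrow> Y \<in> U) \<and>
     (\<forall>X Y. X \<in> U \<and> Y \<in> U \<longrightarrow> X \<inter> Y \<in> U) \<and>
     (\<forall>X. X \<in> U \<or> - X \<in> U) \<and>
     (\<forall>n. {n} \<notin> U)"

definition nonstandard :: "nat set set \<Rightarrow> (nat \<Rightarrow> nat) \<Rightarrow> bool" where
  "nonstandard U \<phi> \<longleftrightarrow> (\<forall>n. {i. \<phi> i = n} \<notin> U)"

text \<open>For a standard finite set s and A a set of finite sets:
  s \<union> {phi[alpha]} \<in> *A.  By (alpha5), *A consists of ideal values of sequences in A,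
  and s \<union> {phi[alpha]} is the ideal value of the sequence i |-> s \<union> {phi i}.\<close>
definition ext_in_star :: "nat set set \<Rightarrow> (nat \<Rightarrow> nat) \<Rightarrow> nat set \<Rightarrow> nat set set \<Rightarrow> bool" where
  "ext_in_star U \<phi> s A \<longleftrightarrow> {i. s \<union> {\<phi> i} \<in> A} \<in> U"

definition init_seg :: "nat set \<Rightarrow> nat set \<Rightarrow> bool" where
  "init_seg s t \<longleftrightarrow> (\<exists>i. s = {j \<in> t. j \<le> i})"

definition is_tree :: "nat set set \<Rightarrow> bool" where
  "is_tree T \<longleftrightarrow> T \<noteq> {} \<and> (\<forall>t\<in>T. finite t) \<and> (\<forall>t\<in>T. \<forall>s. init_seg s t \<longrightarrow> s \<in> T)"

definition comparable_all :: "nat set set \<Rightarrow> nat set \<Rightarrow> bool" where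
  "comparable_all T s \<longleftrightarrow> (\<forall>t\<in>T. init_seg s t \<or> init_seg t s)"

definition is_stem :: "nat set set \<Rightarrow> nat set \<Rightarrow> bool" where
  "is_stem T s \<longleftrightarrow> s \<in> T \<and> comparable_all T s \<and>
     (\<forall>u\<in>T. comparable_all T u \<and> init_seg s u \<longrightarrow> u = s)"

definition has_stem :: "nat set set \<Rightarrow> bool" where
  "has_stem T \<longleftrightarrow> (\<exists>s. is_stem T s)"

definition stem :: "nat set set \<Rightarrow> nat set" where
  "stem T = (THE s. is_stem T s)"

definition tree_above :: "nat set set \<Rightarrow> nat set \<Rightarrow> nat set set" where
  "tree_above T s = {t \<in> T. init_seg s t}"

text \<open>alpha-tree for the sequence alpha (alpha s is a representative of alpha_s).\<close>
definition alpha_tree :: "nat set set \<Rightarrow> (nat set \<Rightarrow> nat \<Rightarrow> nat) \<Rightarrow> nat set set \<Rightarrow> bool" where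
  "alpha_tree U \<alpha> T \<longleftrightarrow> is_tree T \<and> has_stem T \<and> tree_above T (stem T) \<noteq> {} \<and>
     (\<forall>s\<in>tree_above T (stem T). ext_in_star U (\<alpha> s) s T)"

end

theory Submission
  imports Defs
begin

lemma init_seg_subset: "init_seg s t \<Longrightarrow> s \<subseteq> t"
  by (auto simp: init_seg_def)

lemma init_seg_refl: "finite t \<Longrightarrow> init_seg t t"
  unfolding init_seg_def
  by (rule exI[of _ "Max (insert 0 t)"]) auto

lemma init_seg_antisym: "init_seg s t \<Longrightarrow> init_seg t s \<Longrightarrow> s = t"
  using init_seg_subset by blast

lemma init_seg_trans: "init_seg s t \<Longrightarrow> init_seg t u \<Longrightarrow> init_seg s u"
proof -
  assume "init_seg s t" "init_seg t u"
  then obtain i k where "s = {j\<in>t. j \<le> i}" "t = {j\<in>u. j \<le> k}" by (auto simp: init_seg_def)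
  then have "s = {j\<in>u. j \<le> min i k}" by auto
  then show ?thesis unfolding init_seg_def by blast
qed

lemma init_seg_comp: "init_seg s t \<Longrightarrow> init_seg s' t \<Longrightarrow> init_seg s s' \<or> init_seg s' s"
proof -
  assume "init_seg s t" "init_seg s' t"
  then obtain i k where a: "s = {j\<in>t. j \<le> i}" "s' = {j\<in>t. j \<le> k}" by (auto simp: init_seg_def)
  show ?thesis
  proof (cases "i \<le> k")
    case True
    then have "s = {j\<in>s'. j \<le> i}" using a by auto
    then show ?thesis by (auto simp: init_seg_def)
  next
    case False
    then have "s' = {j\<in>s. j \<le> k}" using a by auto
    then show ?thesis by (auto simp: init_seg_def)
  qed
qed

lemma init_seg_ext: "\<forall>j\<in>s. j < x \<Longrightarrow> 0 < (x::nat) \<Longrightarrow> init_seg s (insert x s)"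
  unfolding init_seg_def
  by (rule exI[of _ "x - 1"]) auto

lemma init_seg_ext_cases:
  assumes "\<forall>j\<in>s. j < x" "init_seg u (insert x s)"
  shows "init_seg u s \<or> u = insert x s"
proof -
  obtain i where u: "u = {j \<in> insert x s. j \<le> i}" using assms(2) by (auto simp: init_seg_def)
  show ?thesis
  proof (cases "i < x")
    case True
    then have "u = {j\<in>s. j \<le> i}" using u by auto
    then show ?thesis by (auto simp: init_seg_def)
  next
    case False
    then have "u = insert x s" using u assms(1) by fastforce
    then show ?thesis by simp
  qed
qed

lemma uf_int: "nonprincipal_uf U \<Longrightarrow> X \<in> U \<Longrightarrow> Y \<in> U \<Longrightarrow> X \<inter> Y \<in> U"
  by (simp add: nonprincipal_uf_def)

lemma uf_mono: "nonprincipal_uf U \<Longrightarrow> X \<in> U \<Longrightarrow> X \<subseteq> Y \<Longrightarrow> Y \<in> U"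
  unfolding nonprincipal_uf_def by blast

lemma uf_finite_notin:
  assumes U: "nonprincipal_uf U" and ns: "nonstandard U \<phi>" and F: "finite F"
  shows "{i. \<phi> i \<in> F} \<notin> U"
  using F
proof (induction F rule: finite_induct)
  case empty
  then show ?case using U by (simp add: nonprincipal_uf_def)
next
  case (insert a F)
  have e: "{i. \<phi> i \<in> insert a F} = {i. \<phi> i = a} \<union> {i. \<phi> i \<in> F}" by auto
  have "{i. \<phi> i = a} \<notin> U" using ns by (simp add: nonstandard_def)
  then have c1: "- {i. \<phi> i = a} \<in> U" using U unfolding nonprincipal_uf_def by blast
  have c2: "- {i. \<phi> i \<in> F} \<in> U" using insert.IH U unfolding nonprincipal_uf_def by blast
  have c: "- {i. \<phi> i \<in> insert a F} \<in> U" unfolding e using uf_int[OF U c1 c2] by (simp add: Compl_Un)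
  show ?case
  proof
    assume "{i. \<phi> i \<in> insert a F} \<in> U"
    from uf_int[OF U this c] have "{} \<in> U" by simp
    then show False using U by (simp add: nonprincipal_uf_def)
  qed
qed

lemma uf_large:
  assumes U: "nonprincipal_uf U" and ns: "nonstandard U \<phi>"
  shows "{i. m < \<phi> i} \<in> U"
proof -
  have "{i. \<phi> i \<in> {..m}} \<notin> U" using uf_finite_notin[OF U ns] by blast
  then have "- {i. \<phi> i \<in> {..m}} \<in> U" using U unfolding nonprincipal_uf_def by blast
  moreover have "- {i. \<phi> i \<in> {..m}} = {i. m < \<phi> i}" by auto
  ultimately show ?thesis by simp
qed

lemma stem_unique:
  assumes "is_stem T s" shows "stem T = s"
  unfolding stem_def
proof (rule the_equality)
  show "is_stem T s" by fact
next
  fix s' assume s': "is_stem T s'"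
  have "init_seg s s' \<or> init_seg s' s"
    using assms s' unfolding is_stem_def comparable_all_def by blast
  then show "s' = s"
    using assms s' unfolding is_stem_def by metis
qed

theorem mainTheorem17:
  fixes U :: "nat set set" and \<alpha> :: "nat set \<Rightarrow> nat \<Rightarrow> nat"
    and H T :: "nat set set"
  assumes "nonprincipal_uf U"
    and "\<forall>s. finite s \<longrightarrow> nonstandard U (\<alpha> s)"
    and "\<forall>s\<in>H. finite s"
    and "\<forall>s\<in>H. ext_in_star U (\<alpha> s) s H"
    and "alpha_tree U \<alpha> T"
    and "stem T \<in> H"
  shows "\<exists>S. S \<subseteq> T \<and> alpha_tree U \<alpha> S \<and> stem S = stem T \<and> tree_above S (stem S) \<subseteq> H"
proof -
  note U = assms(1)
  define st where "st = stem T"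
  have tree: "is_tree T" and hs: "has_stem T"
    and ext: "\<forall>s\<in>tree_above T st. ext_in_star U (\<alpha> s) s T"
    using assms(5) by (auto simp: alpha_tree_def st_def)
  obtain s0 where "is_stem T s0" using hs by (auto simp: has_stem_def)
  then have stT: "is_stem T st" using stem_unique st_def by simp
  have stinT: "st \<in> T" using stT by (simp add: is_stem_def)
  have finT: "\<And>t. t \<in> T \<Longrightarrow> finite t" using tree by (simp add: is_tree_def)
  have closT: "\<And>t s. t \<in> T \<Longrightarrow> init_seg s t \<Longrightarrow> s \<in> T" using tree by (simp add: is_tree_def)
  have stH: "st \<in> H" using assms(6) st_def by simp
  have stfin: "finite st" using finT stinT by simp
  define P where "P t \<longleftrightarrow> init_seg st t \<and> t \<in> T \<and> t \<in> H \<and>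
      (\<forall>u. init_seg st u \<and> init_seg u t \<longrightarrow> u \<in> T \<and> u \<in> H)" for t
  define S where "S = {t \<in> T. init_seg t st} \<union> {t. P t}"
  have PT: "P t \<Longrightarrow> t \<in> T" for t by (simp add: P_def)
  have ST: "S \<subseteq> T" using PT by (auto simp: S_def)
  have Pst: "P st"
    unfolding P_def using init_seg_refl[OF stfin] stinT stH init_seg_antisym by blast
  have stS: "st \<in> S" using Pst by (simp add: S_def)
  have good: "{i. P (insert (\<alpha> s i) s)} \<in> U" if Ps: "P s" for s
  proof -
    have sT: "s \<in> T" and sH: "s \<in> H" and sst: "init_seg st s" using Ps by (auto simp: P_def)
    have sfin: "finite s" using finT sT by simp
    have A: "{i. s \<union> {\<alpha> s i} \<in> T} \<in> U"
      using ext sT sst by (auto simp: tree_above_def ext_in_star_def)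
    have B: "{i. s \<union> {\<alpha> s i} \<in> H} \<in> U"
      using assms(4) sH by (auto simp: ext_in_star_def)
    have C: "{i. Max (insert 0 s) < \<alpha> s i} \<in> U"
      using uf_large[OF U] assms(2) sfin by blast
    have "{i. s \<union> {\<alpha> s i} \<in> T} \<inter> {i. s \<union> {\<alpha> s i} \<in> H} \<inter> {i. Max (insert 0 s) < \<alpha> s i} \<in> U"
      using uf_int[OF U uf_int[OF U A B] C] .
    moreover have "{i. s \<union> {\<alpha> s i} \<in> T} \<inter> {i. s \<union> {\<alpha> s i} \<in> H} \<inter> {i. Max (insert 0 s) < \<alpha> s i}
        \<subseteq> {i. P (insert (\<alpha> s i) s)}"
    proof
      fix i assume "i \<in> {i. s \<union> {\<alpha> s i} \<in> T} \<inter> {i. s \<union> {\<alpha> s i} \<in> H} \<inter> {i. Max (insert 0 s) < \<alpha> s i}"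
      then have xT: "insert (\<alpha> s i) s \<in> T" and xH: "insert (\<alpha> s i) s \<in> H"
        and xM: "Max (insert 0 s) < \<alpha> s i" by auto
      have lt: "\<forall>j\<in>s. j < \<alpha> s i" using xM sfin
        by (meson Max_ge finite_insert insertI2 le_less_trans)
      have pos: "0 < \<alpha> s i" using xM by simp
      have sx: "init_seg s (insert (\<alpha> s i) s)" using init_seg_ext[OF lt pos] .
      have "init_seg st (insert (\<alpha> s i) s)" using init_seg_trans[OF sst sx] .
      moreover have "\<forall>u. init_seg st u \<and> init_seg u (insert (\<alpha> s i) s) \<longrightarrow> u \<in> T \<and> u \<in> H"
      proof (intro allI impI)
        fix u assume u: "init_seg st u \<and> init_seg u (insert (\<alpha> s i) s)"
        then have "init_seg u s \<or> u = insert (\<alpha> s i) s" using init_seg_ext_cases[OF lt] by blast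
        then show "u \<in> T \<and> u \<in> H" using u Ps xT xH unfolding P_def by blast
      qed
      ultimately show "i \<in> {i. P (insert (\<alpha> s i) s)}" using xT xH by (simp add: P_def)
    qed
    ultimately show ?thesis using uf_mono[OF U] by blast
  qed
  have treeS: "is_tree S"
    unfolding is_tree_def
  proof (intro conjI ballI allI impI)
    show "S \<noteq> {}" using stS by blast
  next
    fix t assume "t \<in> S" then show "finite t" using ST finT by blast
  next
    fix t s assume tS: "t \<in> S" and st: "init_seg s t"
    have sT: "s \<in> T" using closT ST tS st by blast
    show "s \<in> S"
    proof (cases "init_seg t st")
      case True
      then show ?thesis using init_seg_trans[OF st True] sT by (simp add: S_def)
    next
      case False
      then have Pt: "P t" using tS by (simp add: S_def)
      then have "init_seg st t" by (simp add: P_def)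
      then have "init_seg s st \<or> init_seg st s" using init_seg_comp st by blast
      then show ?thesis
      proof
        assume "init_seg s st" then show ?thesis using sT by (simp add: S_def)
      next
        assume sts: "init_seg st s"
        have "P s" unfolding P_def
          using sts Pt st init_seg_trans unfolding P_def by blast
        then show ?thesis by (simp add: S_def)
      qed
    qed
  qed
  have isS: "is_stem S st"
    unfolding is_stem_def
  proof (intro conjI ballI impI)
    show "st \<in> S" by fact
  next
    show "comparable_all S st"
      using stT ST unfolding is_stem_def comparable_all_def by blast
  next
    fix u assume uS: "u \<in> S" and h: "comparable_all S u \<and> init_seg st u"
    show "u = st"
    proof (rule ccontr)
      assume une: "u \<noteq> st"
      have ufin: "finite u" using uS ST finT by blast
      have G: "{i. P (insert (\<alpha> st i) st)} \<inter> {i. Max (insert 0 st) < \<alpha> st i} \<in> U"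
        using uf_int[OF U good[OF Pst] uf_large[OF U]] assms(2) stfin by blast
      have "{i. P (insert (\<alpha> st i) st)} \<inter> {i. Max (insert 0 st) < \<alpha> st i} \<subseteq> {i. \<alpha> st i \<in> u}"
      proof
        fix i assume "i \<in> {i. P (insert (\<alpha> st i) st)} \<inter> {i. Max (insert 0 st) < \<alpha> st i}"
        then have Px: "P (insert (\<alpha> st i) st)" and xM: "Max (insert 0 st) < \<alpha> st i" by auto
        have lt: "\<forall>j\<in>st. j < \<alpha> st i" using xM stfin
          by (meson Max_ge finite_insert insertI2 le_less_trans)
        have "insert (\<alpha> st i) st \<in> S" using Px by (simp add: S_def)
        then have "init_seg u (insert (\<alpha> st i) st) \<or> init_seg (insert (\<alpha> st i) st) u"
          using h unfolding comparable_all_def by blast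
        then show "i \<in> {i. \<alpha> st i \<in> u}"
        proof
          assume "init_seg u (insert (\<alpha> st i) st)"
          then have "init_seg u st \<or> u = insert (\<alpha> st i) st" using init_seg_ext_cases[OF lt] by blast
          then show ?thesis using h une init_seg_antisym by auto
        next
          assume "init_seg (insert (\<alpha> st i) st) u"
          then show ?thesis using init_seg_subset by auto
        qed
      qed
      then have "{i. \<alpha> st i \<in> u} \<in> U" using uf_mono[OF U G] by blast
      then show False using uf_finite_notin[OF U _ ufin] assms(2) stfin by blast
    qed
  qed
  have stemS: "stem S = st" using stem_unique[OF isS] .
  have aboveS: "tree_above S st \<subseteq> {t. P t}"
  proof
    fix t assume "t \<in> tree_above S st"
    then have tS: "t \<in> S" and h: "init_seg st t" by (auto simp: tree_above_def)
    show "t \<in> {t. P t}"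
    proof (cases "P t")
      case False
      then have "init_seg t st" using tS by (simp add: S_def)
      then have "t = st" using h init_seg_antisym by blast
      then show ?thesis using Pst by simp
    qed simp
  qed
  have alS: "alpha_tree U \<alpha> S"
    unfolding alpha_tree_def stemS
  proof (intro conjI ballI)
    show "is_tree S" by fact
    show "has_stem S" using isS by (auto simp: has_stem_def)
    show "tree_above S st \<noteq> {}" using stS init_seg_refl[OF stfin] by (auto simp: tree_above_def)
  next
    fix s assume "s \<in> tree_above S st"
    then have Ps: "P s" using aboveS by blast
    have "{i. P (insert (\<alpha> s i) s)} \<subseteq> {i. s \<union> {\<alpha> s i} \<in> S}" by (auto simp: S_def)
    then show "ext_in_star U (\<alpha> s) s S"
      unfolding ext_in_star_def using uf_mono[OF U good[OF Ps]] by blast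
  qed
  have "tree_above S (stem S) \<subseteq> H" using aboveS stemS by (auto simp: P_def)
  then show ?thesis
    using ST alS stemS st_def by blast
qed

end
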